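(* Let $n\ge 3$ and let $l_1=l_2=\dots=l_n=l_\infty$. Then the element $(s_{1,n}s_{1,n-1})^{n(n+1)}\in J_n$ acts as the identity on $X(l_1,\dots,l_n,l_\infty)$.
   Context: Cactus group: $J_n$ is the group generated by $s_{p,q}$, $1\le p<q\le n$, subject to the relations $s_{p,q}^2=e$; $s_{p,q}s_{p',q'}=s_{p',q'}s_{p,q}$ if $[p,q]$ and $[p',q']$ are disjoint; $s_{p,q}s_{p',q'}s_{p,q}=s_{p+q-q',p+q-p'}$ if $p\le p'<q'\le q$. Arc diagrams: fix nonnegative integers $l_1,\dots,l_n,l_\infty$. On the boundary circle of a closed disc place $n+1$ marked positions: position $0$ (occupied by $z_\infty$) and positions $1,\dots,n$ following it clockwise. An arc diagram is a bijective assignment of labels $z_1,\dots,z_n$ to positions $1,\dots,n$ together with a finite collection of simple arcs in the disc, pairwise disjoint except at endpoints, each joining two distinct marked points, such that $z_j$ is an endpoint of exactly $l_j$ arcs ($j\in\{1,\dots,n,\infty\}$; $l_j$ is the valence). Parallel arcs are allowed; diagrams are up to isotopy, equivalently determined by the labelling and the number of arcs between each pair of marked points. $X(l_1,\dots,l_n,l_\infty)$ is the set of such diagrams. Action: $s_{p,q}$ ($1\le p<q\le n$) acts by cutting off positions $p,\dots,q$ with a chord $\ell$ (arcs isotoped to cross $\ell$ at most once), reflecting that region by the reflection reversing $\ell$ (label at position $p+t$ goes to position $q-t$, crossing points on $\ell$ reversed), leaving the rest unchanged and reconnecting arcs at $\ell$. Words act right to left; this is an action of $J_n$. *)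

theory Defs
  imports Main
begin

text \<open>
Marked positions on the boundary circle are 0,1,...,n in clockwise
(cyclic) order; position 0 carries z_infinity.  A diagram is a pair (sigma, A):
  sigma k = j  means that label z_j sits at position k (1 <= k <= n);
  A i j     = number of arcs between positions i and j (0 <= i,j <= n).
Arcs are determined up to isotopy by these multiplicities; pairwise disjointness
(except at endpoints) means no two chords with positive multiplicity interleave.
\<close>

type_synonym arc_diagram = "(nat \<Rightarrow> nat) \<times> (nat \<Rightarrow> nat \<Rightarrow> nat)"

definition is_arc_diagram :: "nat \<Rightarrow> (nat \<Rightarrow> nat) \<Rightarrow> nat \<Rightarrow> arc_diagram \<Rightarrow> bool" where
  "is_arc_diagram n l linf D \<longleftrightarrow>
     (let \<sigma> = fst D; A = snd D in
       bij_betw \<sigma> {1..n} {1..n}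
     \<and> (\<forall>k. k \<notin> {1..n} \<longrightarrow> \<sigma> k = 0)
     \<and> (\<forall>i j. A i j = A j i)
     \<and> (\<forall>i. A i i = 0)
     \<and> (\<forall>i j. 0 < A i j \<longrightarrow> i \<le> n \<and> j \<le> n)
     \<and> (\<forall>a b c d. a < c \<and> c < b \<and> b < d \<and> 0 < A a b \<longrightarrow> A c d = 0)
     \<and> (\<forall>k\<in>{1..n}. (\<Sum>j\<le>n. A k j) = l (\<sigma> k))
     \<and> (\<Sum>j\<le>n. A 0 j) = linf)"

definition arc_diagrams :: "nat \<Rightarrow> (nat \<Rightarrow> nat) \<Rightarrow> nat \<Rightarrow> arc_diagram set" where
  "arc_diagrams n l linf = {D. is_arc_diagram n l linf D}"

text \<open>The chord ell runs from the boundary point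
between positions p-1 and p to the one between q and q+1.  Arcs crossing ell are
listed in their order along ell starting from the p-side: by inside endpoint
ascending, and for a fixed inside endpoint by outside endpoint in the order
p-1, ..., 0, n, ..., q+1.\<close>

definition in_cut :: "nat \<Rightarrow> nat \<Rightarrow> nat \<Rightarrow> bool" where
  "in_cut p q i \<longleftrightarrow> p \<le> i \<and> i \<le> q"

definition refl_pos :: "nat \<Rightarrow> nat \<Rightarrow> nat \<Rightarrow> nat" where
  "refl_pos p q i = (if in_cut p q i then p + q - i else i)"

definition outside_order :: "nat \<Rightarrow> nat \<Rightarrow> nat \<Rightarrow> nat list" where
  "outside_order n p q = rev [0..<p] @ rev [Suc q..<Suc n]"

definition crossing_list :: "nat \<Rightarrow> nat \<Rightarrow> nat \<Rightarrow> (nat \<Rightarrow> nat \<Rightarrow> nat) \<Rightarrow> (nat \<times> nat) list" where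
  "crossing_list n p q A =
     concat (map (\<lambda>i. concat (map (\<lambda>j. replicate (A i j) (i, j)) (outside_order n p q)))
                 [p..<Suc q])"

text \<open>After reflecting the cut-off region, the outside half at the k-th crossing point
is reconnected with the (reflected) inside half that was at crossing point m+1-k.
Entries are (outside endpoint, new inside endpoint).\<close>
definition new_crossings :: "nat \<Rightarrow> nat \<Rightarrow> nat \<Rightarrow> (nat \<Rightarrow> nat \<Rightarrow> nat) \<Rightarrow> (nat \<times> nat) list" where
  "new_crossings n p q A =
     (let L = crossing_list n p q A in
        zip (map snd L) (map (\<lambda>x. p + q - fst x) (rev L)))"

definition cactus_act :: "nat \<Rightarrow> nat \<Rightarrow> nat \<Rightarrow> arc_diagram \<Rightarrow> arc_diagram" where
  "cactus_act n p q D =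
     (let \<sigma> = fst D; A = snd D; NC = new_crossings n p q A in
       (\<lambda>k. \<sigma> (refl_pos p q k),
        \<lambda>i j. if in_cut p q i \<and> in_cut p q j then A (refl_pos p q i) (refl_pos p q j)
              else if \<not> in_cut p q i \<and> \<not> in_cut p q j then A i j
              else if in_cut p q i then count_list NC (j, i)
              else count_list NC (i, j)))"

end

theory Submission imports Defs begin

lemma concat_split:
  assumes "sorted_wrt (<) xs"
    and "\<And>x y. x \<in> set xs \<Longrightarrow> y \<in> set xs \<Longrightarrow> x < y \<Longrightarrow> f y = [] \<or> g x = []"
  shows "concat (map (\<lambda>i. f i @ g i) xs) = concat (map f xs) @ concat (map g xs)"
  using assms
proof (induction xs)
  case Nil then show ?case by simp
next
  case (Cons x xs)
  have IH: "concat (map (\<lambda>i. f i @ g i) xs) = concat (map f xs) @ concat (map g xs)"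
    using Cons by auto
  have "g x @ concat (map f xs) = concat (map f xs) @ g x"
  proof (cases "g x = []")
    case True then show ?thesis by simp
  next
    case False
    have a: "\<forall>y\<in>set xs. f y = []" using Cons.prems False by auto
    have c: "concat (map f xs) = []" using a by (simp add: concat_eq_Nil_conv)
    show ?thesis by (simp add: c)
  qed
  then show ?case using IH by simp
qed

lemma map_snd_rep:
  "map snd (concat (map (\<lambda>i. replicate (f i) (i, c)) xs)) = replicate (sum_list (map f xs)) c"
  by (induction xs) (auto simp: replicate_add)

lemma length_rep:
  "length (concat (map (\<lambda>i. replicate (f i) (i, c)) xs)) = sum_list (map f xs)"
  by (induction xs) auto

lemma count_replicate': "count_list (replicate n x) y = (if x = y then n else 0)"
  by (induction n) auto

lemma count_rep:
  "count_list (map h (concat (map (\<lambda>i. replicate (f i) (i, c)) xs))) y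
   = sum_list (map (\<lambda>i. if h (i, c) = y then f i else 0) xs)"
  by (induction xs) (auto simp: count_replicate')

lemma count_pair:
  "count_list (map (Pair c) ys) (c', y) = (if c = c' then count_list ys y else 0)"
  by (induction ys) auto

lemma sum_delta_upt:
  fixes f :: "nat \<Rightarrow> nat"
  assumes "a \<le> k" "k < b" 
  shows "sum_list (map (\<lambda>i. if i = k then f i else 0) [a..<b]) = f k"
proof -
  have "sum_list (map (\<lambda>i. if i = k then f i else 0) [a..<b]) = (\<Sum>i\<in>{a..<b}. if i = k then f i else 0)"
    by (simp add: sum_list_distinct_conv_sum_set)
  also have "\<dots> = f k" using assms by (simp add: sum.delta)
  finally show ?thesis .
qed


lemma sum_cond_upt:
  fixes f :: "nat \<Rightarrow> nat"
  assumes "\<And>i. a \<le> i \<Longrightarrow> i < b \<Longrightarrow> (P i \<longleftrightarrow> i = k)" "a \<le> k" "k < b"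
  shows "sum_list (map (\<lambda>i. if P i then f i else 0) [a..<b]) = f k"
proof -
  have "map (\<lambda>i. if P i then f i else 0) [a..<b] = map (\<lambda>i. if i = k then f i else 0) [a..<b]"
    using assms(1) by (intro map_cong) auto
  then show ?thesis using sum_delta_upt[OF assms(2,3)] by metis
qed

lemma sum_zero_upt:
  fixes f :: "nat \<Rightarrow> nat"
  assumes "\<And>i. a \<le> i \<Longrightarrow> i < b \<Longrightarrow> \<not> P i"
  shows "sum_list (map (\<lambda>i. if P i then f i else 0) [a..<b]) = 0"
proof -
  have "map (\<lambda>i. if P i then f i else 0) [a..<b] = map (\<lambda>i. 0) [a..<b]"
    using assms by (intro map_cong) auto
  then show ?thesis by simp
qed

lemma count_S2:
  assumes "1 \<le> n"
  shows "count_list (new_crossings n 1 n B) (x, y) =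
     (if x = 0 \<and> 1 \<le> y \<and> y \<le> n then B (1 + n - y) 0 else 0)"
proof -
  define L where "L = crossing_list n 1 n B"
  have L: "L = concat (map (\<lambda>i. replicate (B i 0) (i, 0)) [1..<Suc n])"
    unfolding L_def by (simp add: crossing_list_def outside_order_def)
  have NC: "new_crossings n 1 n B = map (Pair 0) (map (\<lambda>x. 1 + n - fst x) (rev L))"
    unfolding new_crossings_def L_def[symmetric] Let_def
    by (simp add: L map_snd_rep zip_replicate1 length_rep)
  have c: "count_list (new_crossings n 1 n B) (x, y) =
     (if x = 0 then sum_list (map (\<lambda>i. if 1 + n - i = y then B i 0 else 0) [1..<Suc n]) else 0)"
    unfolding NC count_pair
    by (simp add: rev_map[symmetric] count_list_rev L count_rep)
  show ?thesis
  proof (cases "x = 0 \<and> 1 \<le> y \<and> y \<le> n")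
    case True
    then show ?thesis unfolding c by (subst sum_cond_upt[where k="1+n-y"]) auto
  next
    case False
    then show ?thesis unfolding c by (auto intro!: sum_zero_upt)
  qed
qed

lemma S2:
  assumes "1 \<le> n" "\<forall>i j. B i j = B j i" "\<forall>i j. 0 < B i j \<longrightarrow> i \<le> n \<and> j \<le> n"
  shows "snd (cactus_act n 1 n (\<sigma>, B)) = (\<lambda>i j. B (refl_pos 1 n i) (refl_pos 1 n j))"
proof (intro ext)
  fix i j
  have cnt: "\<And>x y. count_list (new_crossings n (Suc 0) n B) (x,y) =
     (if x = 0 \<and> 1 \<le> y \<and> y \<le> n then B (1 + n - y) 0 else 0)"
    using count_S2[OF assms(1)] by simp
  have z: "\<And>i j. i > n \<or> j > n \<Longrightarrow> B i j = 0" using assms(3) by (meson gr0I not_le)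
  show "snd (cactus_act n 1 n (\<sigma>, B)) i j = B (refl_pos 1 n i) (refl_pos 1 n j)"
    unfolding cactus_act_def Let_def using assms(1)
    apply (simp add: cnt)
    apply (auto simp: in_cut_def refl_pos_def z assms(2))
    done
qed


lemma sum_split_ends:
  fixes f :: "nat \<Rightarrow> nat"
  assumes "1 \<le> n"
  shows "(\<Sum>j\<le>n. f j) = f 0 + f n + sum_list (map f [1..<n])"
proof -
  have "{..n} = insert 0 (insert n {1..<n})" using assms by auto
  then have "(\<Sum>j\<le>n. f j) = f 0 + (f n + sum f {1..<n})" using assms by simp
  then show ?thesis by (simp add: sum_list_distinct_conv_sum_set)
qed

lemma count_S1:
  assumes n2: "2 \<le> n" and sym: "\<forall>i j. A i j = A j i" and d0: "\<forall>i. A i i = 0"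
    and nc: "\<forall>a b c d. a < c \<and> c < b \<and> b < d \<and> 0 < A a b \<longrightarrow> A c d = 0"
    and rows: "(\<Sum>j\<le>n. A 0 j) = (\<Sum>j\<le>n. A n j)"
  shows "count_list (new_crossings n 1 (n - 1) A) (x, y) =
     (if 1 \<le> y \<and> y \<le> n - 1 then (if x = 0 then A (n - y) n else if x = n then A (n - y) 0 else 0) else 0)"
proof -
  define L0 where "L0 = concat (map (\<lambda>i. replicate (A i 0) (i, 0::nat)) [1..<n])"
  define Ln where "Ln = concat (map (\<lambda>i. replicate (A i n) (i, n)) [1..<n])"
  define h where "h = (\<lambda>x::nat\<times>nat. 1 + (n - 1) - fst x)"
  have oo: "outside_order n (Suc 0) (n - Suc 0) = [0, n]" using n2 by (simp add: outside_order_def)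
  have L: "crossing_list n 1 (n - 1) A = L0 @ Ln"
  proof -
    have "crossing_list n 1 (n - 1) A =
      concat (map (\<lambda>i. replicate (A i 0) (i, 0) @ replicate (A i n) (i, n)) [1..<n])"
      using n2 by (simp add: crossing_list_def oo)
    also have "\<dots> = L0 @ Ln" unfolding L0_def Ln_def
    proof (rule concat_split)
      show "sorted_wrt (<) [1..<n]" by simp
    next
      fix x y assume "x \<in> set [1..<n]" "y \<in> set [1..<n]" "x < y"
      then have "A 0 y > 0 \<Longrightarrow> A x n = 0" using nc[rule_format, of 0 x y n] by auto
      then show "replicate (A y 0) (y, 0) = [] \<or> replicate (A x n) (x, n) = []"
        using sym by (metis gr0I replicate_empty)
    qed
    finally show ?thesis .
  qed
  define a where "a = sum_list (map (\<lambda>i. A i 0) [1..<n])"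
  have ab: "sum_list (map (\<lambda>i. A i n) [1..<n]) = a"
  proof -
    have "(\<Sum>j\<le>n. A 0 j) = A 0 n + sum_list (map (\<lambda>j. A 0 j) [1..<n])"
      using sum_split_ends[of n "A 0"] n2 d0 by simp
    moreover have "(\<Sum>j\<le>n. A n j) = A n 0 + sum_list (map (\<lambda>j. A n j) [1..<n])"
      using sum_split_ends[of n "A n"] n2 d0 by simp
    moreover have "map (\<lambda>j. A 0 j) [1..<n] = map (\<lambda>i. A i 0) [1..<n]"
      "map (\<lambda>j. A n j) [1..<n] = map (\<lambda>i. A i n) [1..<n]" using sym by auto
    ultimately show ?thesis using rows sym unfolding a_def by (metis add_left_cancel)
  qed
  have lL0: "length L0 = a" and lLn: "length Ln = a"
    using ab unfolding L0_def Ln_def a_def by (simp_all add: length_rep)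
  have sL0: "map snd L0 = replicate a 0" and sLn: "map snd Ln = replicate a n"
    using ab unfolding L0_def Ln_def a_def by (simp_all add: map_snd_rep)
  have NC: "new_crossings n 1 (n - 1) A =
     map (Pair 0) (map h (rev Ln)) @ map (Pair n) (map h (rev L0))"
    unfolding new_crossings_def Let_def L h_def[symmetric]
    by (simp add: sL0 sLn zip_append lL0 lLn zip_replicate1)
  have cn: "count_list (map h Ln) y =
      (if 1 \<le> y \<and> y \<le> n - 1 then A (n - y) n else 0)"
  proof -
    have e: "count_list (map h Ln) y = sum_list (map (\<lambda>i. if 1 + (n - 1) - i = y then A i n else 0) [1..<n])"
      unfolding Ln_def h_def count_rep by simp
    show ?thesis
    proof (cases "1 \<le> y \<and> y \<le> n - 1")
      case True
      then show ?thesis unfolding e using n2 by (subst sum_cond_upt[where k="n-y"]) auto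
    next
      case False
      then show ?thesis unfolding e using n2 by (auto intro!: sum_zero_upt)
    qed
  qed
  have c0: "count_list (map h L0) y =
      (if 1 \<le> y \<and> y \<le> n - 1 then A (n - y) 0 else 0)"
  proof -
    have e: "count_list (map h L0) y = sum_list (map (\<lambda>i. if 1 + (n - 1) - i = y then A i 0 else 0) [1..<n])"
      unfolding L0_def h_def count_rep by simp
    show ?thesis
    proof (cases "1 \<le> y \<and> y \<le> n - 1")
      case True
      then show ?thesis unfolding e using n2 by (subst sum_cond_upt[where k="n-y"]) auto
    next
      case False
      then show ?thesis unfolding e using n2 by (auto intro!: sum_zero_upt)
    qed
  qed
  show ?thesis unfolding NC count_list_append count_pair
    using n2 by (simp add: rev_map[symmetric] count_list_rev cn c0)
qed


definition rr :: "nat \<Rightarrow> nat \<Rightarrow> nat" where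
  "rr n i = (if i \<le> n then n - i else i)"

definition rho :: "nat \<Rightarrow> nat \<Rightarrow> nat" where
  "rho n i = (if i = 0 then n else if i \<le> n then i - 1 else i)"

definition gg :: "nat \<Rightarrow> nat \<Rightarrow> nat" where
  "gg n = refl_pos 1 (n - 1) \<circ> refl_pos 1 n"

definition PP :: "nat \<Rightarrow> nat \<Rightarrow> (nat \<Rightarrow> nat \<Rightarrow> nat) \<Rightarrow> bool" where
  "PP n L A \<longleftrightarrow> (\<forall>i j. A i j = A j i) \<and> (\<forall>i. A i i = 0)
     \<and> (\<forall>i j. 0 < A i j \<longrightarrow> i \<le> n \<and> j \<le> n)
     \<and> (\<forall>a b c d. a < c \<and> c < b \<and> b < d \<and> 0 < A a b \<longrightarrow> A c d = 0)
     \<and> (\<forall>i\<le>n. (\<Sum>j\<le>n. A i j) = L)"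

lemma S1:
  assumes n2: "2 \<le> n" and P: "PP n L A"
  shows "snd (cactus_act n 1 (n - 1) (\<sigma>, A)) = (\<lambda>i j. A (rr n i) (rr n j))"
proof (intro ext)
  fix i j
  have sym: "\<forall>i j. A i j = A j i" and d0: "\<forall>i. A i i = 0"
    and sp: "\<forall>i j. 0 < A i j \<longrightarrow> i \<le> n \<and> j \<le> n"
    and nc: "\<forall>a b c d. a < c \<and> c < b \<and> b < d \<and> 0 < A a b \<longrightarrow> A c d = 0"
    and r: "\<forall>i\<le>n. (\<Sum>j\<le>n. A i j) = L" using P unfolding PP_def by auto
  have rows: "(\<Sum>j\<le>n. A 0 j) = (\<Sum>j\<le>n. A n j)"
    using r[rule_format, of 0] r[rule_format, of n] by simp
  have cnt: "\<And>x y. count_list (new_crossings n (Suc 0) (n - Suc 0) A) (x, y) =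
     (if 1 \<le> y \<and> y \<le> n - 1 then (if x = 0 then A (n - y) n else if x = n then A (n - y) 0 else 0) else 0)"
    using count_S1[OF n2 sym d0 nc rows] by simp
  have z: "\<And>i j. i > n \<or> j > n \<Longrightarrow> A i j = 0" using sp by (meson gr0I not_le)
  show "snd (cactus_act n 1 (n - 1) (\<sigma>, A)) i j = A (rr n i) (rr n j)"
    unfolding cactus_act_def Let_def using n2
    apply (simp add: cnt)
    apply (auto simp: in_cut_def refl_pos_def z rr_def d0 sym)
    done
qed


lemma fst_act: "fst (cactus_act n p q (\<sigma>, A)) = \<sigma> \<circ> refl_pos p q"
  by (simp add: cactus_act_def Let_def o_def)

lemma rr_refl: "1 \<le> n \<Longrightarrow> rr n (refl_pos (Suc 0) n i) = rho n i"
  by (auto simp: rr_def refl_pos_def rho_def in_cut_def)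

lemma step:
  assumes n2: "2 \<le> n" and P: "PP n L A"
  shows "(cactus_act n 1 n \<circ> cactus_act n 1 (n - 1)) (\<sigma>, A) = (\<sigma> \<circ> gg n, \<lambda>i j. A (rho n i) (rho n j))"
proof -
  define B where "B = (\<lambda>i j. A (rr n i) (rr n j))"
  have e1: "cactus_act n 1 (n - 1) (\<sigma>, A) = (\<sigma> \<circ> refl_pos 1 (n - 1), B)"
    using fst_act S1[OF n2 P] unfolding B_def by (metis prod.collapse)
  have sym: "\<forall>i j. B i j = B j i" using P unfolding B_def PP_def by auto
  have sp: "\<forall>i j. 0 < B i j \<longrightarrow> i \<le> n \<and> j \<le> n"
  proof (intro allI impI)
    fix i j assume "0 < B i j"
    then have "rr n i \<le> n \<and> rr n j \<le> n" using P unfolding B_def PP_def by auto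
    then show "i \<le> n \<and> j \<le> n" by (auto simp: rr_def split: if_splits)
  qed
  have e2: "cactus_act n 1 n (\<sigma> \<circ> refl_pos 1 (n - 1), B) = (\<sigma> \<circ> gg n, \<lambda>i j. A (rho n i) (rho n j))"
  proof -
    have "snd (cactus_act n 1 n (\<sigma> \<circ> refl_pos 1 (n - 1), B)) = (\<lambda>i j. B (refl_pos 1 n i) (refl_pos 1 n j))"
      by (rule S2) (use n2 sym sp in auto)
    also have "\<dots> = (\<lambda>i j. A (rho n i) (rho n j))" unfolding B_def using n2 by (simp add: rr_refl)
    finally have "snd (cactus_act n 1 n (\<sigma> \<circ> refl_pos 1 (n - 1), B)) = (\<lambda>i j. A (rho n i) (rho n j))" .
    moreover have "fst (cactus_act n 1 n (\<sigma> \<circ> refl_pos 1 (n - 1), B)) = \<sigma> \<circ> gg n"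
      by (simp add: fst_act gg_def o_assoc)
    ultimately show ?thesis by (metis prod.collapse)
  qed
  show ?thesis using e1 e2 by simp
qed

lemma sum_rho:
  fixes f :: "nat \<Rightarrow> nat"
  shows "(\<Sum>j\<le>n. f (rho n j)) = (\<Sum>j\<le>n. f j)"
proof (cases n)
  case 0 then show ?thesis by (simp add: rho_def)
next
  case (Suc m)
  have "(\<Sum>j\<le>Suc m. f (rho (Suc m) j)) = f (Suc m) + (\<Sum>i\<le>m. f (rho (Suc m) (Suc i)))"
    unfolding sum.atMost_Suc_shift[of _ m] by (simp add: rho_def)
  also have "(\<Sum>i\<le>m. f (rho (Suc m) (Suc i))) = (\<Sum>i\<le>m. f i)"
    by (rule sum.cong) (auto simp: rho_def)
  finally show ?thesis using Suc by simp
qed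

lemma PP_rho:
  assumes n1: "1 \<le> n" and P: "PP n L A"
  shows "PP n L (\<lambda>i j. A (rho n i) (rho n j))"
proof -
  have sym: "\<forall>i j. A i j = A j i" and d0: "\<forall>i. A i i = 0"
    and sp: "\<forall>i j. 0 < A i j \<longrightarrow> i \<le> n \<and> j \<le> n"
    and nc: "\<forall>a b c d. a < c \<and> c < b \<and> b < d \<and> 0 < A a b \<longrightarrow> A c d = 0"
    and r: "\<forall>i\<le>n. (\<Sum>j\<le>n. A i j) = L" using P unfolding PP_def by auto
  have z: "\<And>i j. i > n \<or> j > n \<Longrightarrow> A i j = 0" using sp by (meson gr0I not_le)
  have inj: "\<And>i j. rho n i = rho n j \<Longrightarrow> i = j" by (auto simp: rho_def split: if_splits)
  have spr: "\<forall>i j. 0 < A (rho n i) (rho n j) \<longrightarrow> i \<le> n \<and> j \<le> n"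
  proof (intro allI impI)
    fix i j assume "0 < A (rho n i) (rho n j)"
    then have "rho n i \<le> n \<and> rho n j \<le> n" using sp by auto
    then show "i \<le> n \<and> j \<le> n" by (auto simp: rho_def split: if_splits)
  qed
  have ncr: "\<forall>a b c d. a < c \<and> c < b \<and> b < d \<and> 0 < A (rho n a) (rho n b) \<longrightarrow> A (rho n c) (rho n d) = 0"
  proof (intro allI impI)
    fix a b c d assume h: "a < c \<and> c < b \<and> b < d \<and> 0 < A (rho n a) (rho n b)"
    show "A (rho n c) (rho n d) = 0"
    proof (rule ccontr)
      assume "A (rho n c) (rho n d) \<noteq> 0"
      then have cd: "0 < A (rho n c) (rho n d)" by simp
      have "d \<le> n" using spr cd by blast
      have "b \<le> n" using spr h by blast
      show False
      proof (cases "a = 0")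
        case False
        then have "rho n a = a - 1" "rho n b = b - 1" "rho n c = c - 1" "rho n d = d - 1"
          using h \<open>d \<le> n\<close> by (auto simp: rho_def)
        moreover have "a-1 < c-1" "c-1 < b-1" "b-1 < d-1" using h False by auto
        ultimately show False using nc[rule_format, of "a-1" "c-1" "b-1" "d-1"] h cd by simp
      next
        case True
        then have "rho n a = n" "rho n b = b - 1" "rho n c = c - 1" "rho n d = d - 1"
          using h \<open>d \<le> n\<close> by (auto simp: rho_def)
        moreover have "c-1 < b-1" "b-1 < d-1" "d-1 < n" using h True \<open>d \<le> n\<close> by auto
        moreover have "0 < A (b-1) n" using h sym \<open>rho n a = n\<close> \<open>rho n b = b - 1\<close> by metis
        ultimately show False using nc[rule_format, of "c-1" "b-1" "d-1" n] cd by simp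
      qed
    qed
  qed
  have rr: "\<forall>i\<le>n. (\<Sum>j\<le>n. A (rho n i) (rho n j)) = L"
  proof (intro allI impI)
    fix i assume "i \<le> n"
    then have "rho n i \<le> n" by (auto simp: rho_def)
    then show "(\<Sum>j\<le>n. A (rho n i) (rho n j)) = L" using r sum_rho[of "A (rho n i)" n] by simp
  qed
  show ?thesis unfolding PP_def using sym d0 spr ncr rr inj by auto
qed


lemma gg_in:
  assumes "2 \<le> n" "1 \<le> k" "k \<le> n"
  shows "gg n k = (k - 1 + (n - 1)) mod n + 1"
proof (cases "k = 1")
  case True
  then show ?thesis using assms by (simp add: gg_def refl_pos_def in_cut_def)
next
  case False
  then have "gg n k = k - 1" using assms by (auto simp: gg_def refl_pos_def in_cut_def)
  moreover have "(k - 1 + (n - 1)) mod n = k - 2"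
  proof -
    have eq: "k - 1 + (n - 1) = (k - 2) + n" using False assms by simp
    have "((k - 2) + n) mod n = k - 2" by (subst mod_add_self2) (use assms in simp)
    then show ?thesis by (simp only: eq)
  qed
  ultimately show ?thesis using False assms by simp
qed

lemma gg_out: "\<not> (1 \<le> k \<and> k \<le> n) \<Longrightarrow> gg n k = k"
  by (auto simp: gg_def refl_pos_def in_cut_def)

lemma gg_pow:
  assumes "2 \<le> n" "1 \<le> k" "k \<le> n"
  shows "(gg n ^^ m) k = (k - 1 + m * (n - 1)) mod n + 1"
proof (induction m)
  case 0 then show ?case using assms by simp
next
  case (Suc m)
  define x where "x = k - 1 + m * (n - 1)"
  have "(gg n ^^ Suc m) k = gg n (x mod n + 1)" using Suc x_def by simp
  also have "\<dots> = (x mod n + (n - 1)) mod n + 1"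
    using gg_in[of n "x mod n + 1"] assms by (simp add: Suc_leI)
  also have "\<dots> = (x + (n - 1)) mod n + 1" by (simp add: mod_add_left_eq)
  also have "x + (n - 1) = k - 1 + Suc m * (n - 1)" unfolding x_def by simp
  finally show ?case .
qed

lemma gg_pow_out: "\<not> (1 \<le> k \<and> k \<le> n) \<Longrightarrow> (gg n ^^ m) k = k"
  by (induction m) (auto simp: gg_out)

lemma rho_in: "i \<le> n \<Longrightarrow> rho n i = (i + n) mod (n + 1)"
proof (cases "i = 0")
  case True then show ?thesis by (simp add: rho_def)
next
  case False
  assume "i \<le> n"
  have eq: "i + n = (i - 1) + (n + 1)" using False by simp
  have "((i - 1) + (n + 1)) mod (n + 1) = i - 1" by (subst mod_add_self2) (use \<open>i \<le> n\<close> False in simp)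
  then have "(i + n) mod (n + 1) = i - 1" by (simp only: eq)
  then show ?thesis using False \<open>i \<le> n\<close> by (simp add: rho_def)
qed

lemma rho_pow:
  assumes "i \<le> n"
  shows "(rho n ^^ m) i = (i + m * n) mod (n + 1)"
proof (induction m)
  case 0 then show ?case using assms by simp
next
  case (Suc m)
  have "(rho n ^^ Suc m) i = rho n ((i + m * n) mod (n + 1))" using Suc by simp
  also have "\<dots> = ((i + m * n) mod (n + 1) + n) mod (n + 1)"
    by (rule rho_in) (metis Suc_eq_plus1 less_Suc_eq_le mod_less_divisor zero_less_Suc)
  also have "\<dots> = ((i + m * n) + n) mod (n + 1)" by (simp add: mod_add_left_eq)
  also have "\<dots> = (i + Suc m * n) mod (n + 1)" by (simp add: ac_simps)
  finally show ?case .
qed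

lemma rho_pow_out: "n < i \<Longrightarrow> (rho n ^^ m) i = i"
  by (induction m) (auto simp: rho_def)

lemma iter:
  assumes n2: "2 \<le> n"
  shows "PP n L A \<Longrightarrow> ((cactus_act n 1 n \<circ> cactus_act n 1 (n - 1)) ^^ m) (\<sigma>, A)
     = (\<sigma> \<circ> (gg n ^^ m), \<lambda>i j. A ((rho n ^^ m) i) ((rho n ^^ m) j))"
proof (induction m arbitrary: \<sigma> A)
  case 0 then show ?case by simp
next
  case (Suc m)
  have P': "PP n L (\<lambda>i j. A (rho n i) (rho n j))" using PP_rho Suc.prems n2 by simp
  have "((cactus_act n 1 n \<circ> cactus_act n 1 (n - 1)) ^^ Suc m) (\<sigma>, A)
      = ((cactus_act n 1 n \<circ> cactus_act n 1 (n - 1)) ^^ m) (\<sigma> \<circ> gg n, \<lambda>i j. A (rho n i) (rho n j))"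
    proof -
    have s: "cactus_act n 1 n (cactus_act n 1 (n - 1) (\<sigma>, A)) = (\<sigma> \<circ> gg n, \<lambda>i j. A (rho n i) (rho n j))"
      using step[OF n2 Suc.prems] by simp
    show ?thesis by (simp only: funpow_Suc_right o_apply s)
  qed
  also have "\<dots> = (\<sigma> \<circ> gg n \<circ> (gg n ^^ m), \<lambda>i j. A (rho n ((rho n ^^ m) i)) (rho n ((rho n ^^ m) j)))"
    using Suc.IH[OF P', of "\<sigma> \<circ> gg n"] by (simp add: o_def)
  also have "\<dots> = (\<sigma> \<circ> (gg n ^^ Suc m), \<lambda>i j. A ((rho n ^^ Suc m) i) ((rho n ^^ Suc m) j))"
    by (simp add: o_assoc)
  finally show ?case .
qed

theorem mainTheorem16:
  fixes n linf :: nat and l :: "nat \<Rightarrow> nat"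
  assumes "3 \<le> n"
    and "\<forall>j\<in>{1..n}. l j = linf"
  shows "\<forall>D\<in>arc_diagrams n l linf.
           ((cactus_act n 1 n \<circ> cactus_act n 1 (n - 1)) ^^ (n * (n + 1))) D = D"
proof
  fix D assume D: "D \<in> arc_diagrams n l linf"
  obtain \<sigma> A where DA: "D = (\<sigma>, A)" by (cases D)
  have n2: "2 \<le> n" using assms(1) by simp
  have isd: "is_arc_diagram n l linf (\<sigma>, A)" using D DA by (simp add: arc_diagrams_def)
  have P: "PP n linf A"
  proof -
    have C: "bij_betw \<sigma> {1..n} {1..n}
     \<and> (\<forall>k. k \<notin> {1..n} \<longrightarrow> \<sigma> k = 0)
     \<and> (\<forall>i j. A i j = A j i)
     \<and> (\<forall>i. A i i = 0)
     \<and> (\<forall>i j. 0 < A i j \<longrightarrow> i \<le> n \<and> j \<le> n)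
     \<and> (\<forall>a b c d. a < c \<and> c < b \<and> b < d \<and> 0 < A a b \<longrightarrow> A c d = 0)
     \<and> (\<forall>k\<in>{1..n}. (\<Sum>j\<le>n. A k j) = l (\<sigma> k))
     \<and> (\<Sum>j\<le>n. A 0 j) = linf"
      using isd unfolding is_arc_diagram_def Let_def fst_conv snd_conv .
    note CC = C[THEN conjunct1] C[THEN conjunct2, THEN conjunct1]
      C[THEN conjunct2, THEN conjunct2, THEN conjunct1]
      C[THEN conjunct2, THEN conjunct2, THEN conjunct2, THEN conjunct1]
      C[THEN conjunct2, THEN conjunct2, THEN conjunct2, THEN conjunct2, THEN conjunct1]
      C[THEN conjunct2, THEN conjunct2, THEN conjunct2, THEN conjunct2, THEN conjunct2, THEN conjunct1]
      C[THEN conjunct2, THEN conjunct2, THEN conjunct2, THEN conjunct2, THEN conjunct2, THEN conjunct2, THEN conjunct1]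
      C[THEN conjunct2, THEN conjunct2, THEN conjunct2, THEN conjunct2, THEN conjunct2, THEN conjunct2, THEN conjunct2]
    have bij: "bij_betw \<sigma> {1..n} {1..n}" by (rule CC(1))
    have rk: "\<forall>k\<in>{1..n}. (\<Sum>j\<le>n. A k j) = l (\<sigma> k)" by (rule CC(7))
    have r0: "(\<Sum>j\<le>n. A 0 j) = linf" by (rule CC(8))
    have "\<forall>i\<le>n. (\<Sum>j\<le>n. A i j) = linf"
    proof (intro allI impI)
      fix i assume "i \<le> n"
      show "(\<Sum>j\<le>n. A i j) = linf"
      proof (cases "i = 0")
        case True then show ?thesis using r0 by simp
      next
        case False
        then have "i \<in> {1..n}" using \<open>i \<le> n\<close> by simp
        then have "\<sigma> i \<in> {1..n}" using bij bij_betwE by blast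
        then show ?thesis using rk \<open>i \<in> {1..n}\<close> assms(2) by simp
      qed
    qed
    moreover have "\<forall>i j. A i j = A j i" "\<forall>i. A i i = 0" "\<forall>i j. 0 < A i j \<longrightarrow> i \<le> n \<and> j \<le> n"
      "\<forall>a b c d. a < c \<and> c < b \<and> b < d \<and> 0 < A a b \<longrightarrow> A c d = 0"
      by (rule CC(3), rule CC(4), rule CC(5), rule CC(6))
    ultimately show ?thesis unfolding PP_def by blast
  qed
  define N where "N = n * (n + 1)"
  have g: "(gg n ^^ N) k = k" for k
  proof (cases "1 \<le> k \<and> k \<le> n")
    case True
    have "(k - 1 + N * (n - 1)) mod n = k - 1"
    proof -
      have eq: "k - 1 + N * (n - 1) = (k - 1) + n * ((n + 1) * (n - 1))" unfolding N_def by (simp add: algebra_simps)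
      show ?thesis by (simp only: eq mod_mult_self2) (use True in \<open>auto intro!: mod_less\<close>)
    qed
    then show ?thesis using gg_pow[OF n2, of k N] True by simp
  next
    case False then show ?thesis by (rule gg_pow_out)
  qed
  have r: "(rho n ^^ N) i = i" for i
  proof (cases "i \<le> n")
    case True
    have "(i + N * n) mod (n + 1) = i"
    proof -
      have eq: "i + N * n = i + (n + 1) * (n * n)" unfolding N_def by (simp add: ac_simps)
      show ?thesis by (simp only: eq mod_mult_self2) (use True in simp)
    qed
    then show ?thesis using rho_pow[OF True, of N] by simp
  next
    case False then show ?thesis by (simp add: rho_pow_out)
  qed
  have "((cactus_act n 1 n \<circ> cactus_act n 1 (n - 1)) ^^ N) (\<sigma>, A) = (\<sigma>, A)"
    unfolding iter[OF n2 P] using g r by (simp add: o_def)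
  then show "((cactus_act n 1 n \<circ> cactus_act n 1 (n - 1)) ^^ (n * (n + 1))) D = D"
    unfolding DA N_def[symmetric] .
qed

end
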